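(* Let $p$ be an odd prime. Then \[ \sum_{j=0}^{p}E_j\equiv\frac32\pmod p . \]
   Context: The Euler polynomials are defined by $\sum_{n\ge0}E_n(x)\frac{t^n}{n!}=\frac{2}{e^t+1}e^{xt}$, and $E_n:=E_n(0)$ (so $E_0=1$, $E_1=-1/2$, $E_{2m}=0$ for $m\ge1$). For rationals whose denominators are coprime to $p$, $a\equiv b\pmod p$ means $a-b$ is $p$ times a rational with denominator coprime to $p$. *)

theory Defs
  imports "HOL-Computational_Algebra.Computational_Algebra"
begin

text \<open>Euler numbers E_n = E_n(0), defined through the exponential generating function
  sum_n E_n t^n/n! = 2/(e^t+1), as formal power series over the rationals.\<close>
definition euler_number :: "nat \<Rightarrow> rat" where
  "euler_number n = fact n * fps_nth (2 / (fps_exp 1 + 1)) n"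

definition rat_cong_mod :: "rat \<Rightarrow> rat \<Rightarrow> int \<Rightarrow> bool" where
  "rat_cong_mod a b p \<longleftrightarrow>
     (\<exists>r::rat. a - b = of_int p * r \<and> coprime (snd (quotient_of r)) p)"

end

theory Submission
  imports Defs "HOL-Number_Theory.Number_Theory"
begin

lemma euler_rec:
  "(\<Sum>i=0..n. of_nat (n choose i) * euler_number i) + euler_number n = (if n = 0 then 2 else 0)"
proof -
  define G where "G = fps_exp (1::rat) + 1"
  define F where "F = 2 / G"
  have G0: "G $ 0 = 2" by (simp add: G_def)
  have "F * G = 2" unfolding F_def by (rule fps_times_divide_eq) (use G0 in auto)
  then have "(F * G) $ n = (2::rat fps) $ n" by simp
  hence *: "(\<Sum>i=0..n. F$i * (1/fact (n-i))) + F $ n = (if n=0 then 2 else 0)"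
    by (simp add: fps_mult_nth G_def distrib_left sum.distrib fps_numeral_nth
        if_distrib sum.delta cong: if_cong)
  have "fact n * ((\<Sum>i=0..n. F$i * (1/fact (n-i))) + F $ n) = (if n=0 then 2 else 0)"
    using * by simp
  moreover have "fact n * ((\<Sum>i=0..n. F$i * (1/fact (n-i))) + F $ n) =
     (\<Sum>i=0..n. of_nat (n choose i) * euler_number i) + euler_number n"
  proof -
    have "fact n * (F$i * (1/fact (n-i))) = of_nat (n choose i) * euler_number i" if "i \<le> n" for i
    proof -
      have "(fact n :: rat) = of_nat (fact i * fact (n-i) * (n choose i))"
        using binomial_fact_lemma[OF that] by (simp only: of_nat_fact)
      then show ?thesis unfolding euler_number_def F_def G_def
        by (simp add: field_simps)
    qed
    then show ?thesis
      by (simp add: distrib_left sum_distrib_left euler_number_def F_def G_def)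
  qed
  ultimately show ?thesis by simp
qed

lemma euler_0: "euler_number 0 = 1"
  using euler_rec[of 0] by simp

lemma euler_rec2: "euler_number (Suc m) * 2 = - (\<Sum>i<Suc m. of_nat (Suc m choose i) * euler_number i)"
proof -
  have "(\<Sum>i=0..Suc m. of_nat (Suc m choose i) * euler_number i) =
     (\<Sum>i<Suc m. of_nat (Suc m choose i) * euler_number i) + euler_number (Suc m)"
    by (simp add: atLeast0AtMost sum.atMost_Suc lessThan_Suc_atMost)
  with euler_rec[of "Suc m"] show ?thesis by simp
qed

lemma euler_int: "euler_number n * 2 ^ n \<in> \<int>"
proof (induction n rule: less_induct)
  case (less n)
  show ?case
  proof (cases n)
    case 0 then show ?thesis by (simp add: euler_0)
  next
    case (Suc m)
    have "euler_number (Suc m) * 2 ^ Suc m = (euler_number (Suc m) * 2) * 2 ^ m" by simp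
    also have "\<dots> = - (\<Sum>i<Suc m. of_nat (Suc m choose i) * 2 ^ (m - i) * (euler_number i * 2 ^ i))"
    proof -
      have eq: "of_nat (Suc m choose i) * euler_number i * 2 ^ m =
            of_nat (Suc m choose i) * 2 ^ (m - i) * (euler_number i * 2 ^ i)" if "i < Suc m" for i
      proof -
        have "(2::rat) ^ m = 2 ^ (m - i) * 2 ^ i" using that by (simp add: power_add[symmetric])
        then show ?thesis by simp
      qed
      have "(\<Sum>i<Suc m. of_nat (Suc m choose i) * euler_number i) * 2 ^ m =
          (\<Sum>i<Suc m. of_nat (Suc m choose i) * 2 ^ (m - i) * (euler_number i * 2 ^ i))"
        unfolding sum_distrib_right by (rule sum.cong[OF refl], rule eq, simp)
      then show ?thesis by (simp only: euler_rec2 mult_minus_left)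
    qed
    also have "\<dots> \<in> \<int>"
    proof (intro Ints_minus Ints_sum)
      fix i assume i: "i \<in> {..<Suc m}"
      have hi: "euler_number i * 2 ^ i \<in> \<int>" using less Suc i by auto
      have "of_nat (Suc m choose i) * 2 ^ (m - i) \<in> (\<int> :: rat set)" by simp
      from Ints_mult[OF this hi]
      show "of_nat (Suc m choose i) * 2 ^ (m - i) * (euler_number i * 2 ^ i) \<in> \<int>" .
    qed
    finally show ?thesis using Suc by simp
  qed
qed

definition ee :: "nat \<Rightarrow> int" where "ee n = \<lfloor>euler_number n * 2 ^ n\<rfloor>"

lemma ee: "of_int (ee n) = euler_number n * 2 ^ n"
  unfolding ee_def using euler_int[of n] by (metis Ints_cases floor_of_int)

lemma ee_0: "ee 0 = 1"
  using ee[of 0] by (simp add: euler_0)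

lemma ee_rec: "2 * ee (Suc m) = - (\<Sum>i<Suc m. int (Suc m choose i) * 2 ^ (Suc m - i) * ee i)"
proof -
  have "(of_int (2 * ee (Suc m)) :: rat) = (euler_number (Suc m) * 2) * 2 ^ Suc m"
    by (simp add: ee)
  also have "\<dots> = - (\<Sum>i<Suc m. of_nat (Suc m choose i) * 2 ^ (Suc m - i) * (euler_number i * 2 ^ i))"
  proof -
    have eq: "of_nat (Suc m choose i) * euler_number i * 2 ^ Suc m =
          of_nat (Suc m choose i) * 2 ^ (Suc m - i) * (euler_number i * 2 ^ i)" if "i < Suc m" for i
    proof -
      have "(2::rat) ^ Suc m = 2 ^ (Suc m - i) * 2 ^ i" using that
        by (simp add: power_add[symmetric] del: power_Suc)
      then show ?thesis by simp
    qed
    have "(\<Sum>i<Suc m. of_nat (Suc m choose i) * euler_number i) * 2 ^ Suc m =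
        (\<Sum>i<Suc m. of_nat (Suc m choose i) * 2 ^ (Suc m - i) * (euler_number i * 2 ^ i))"
      unfolding sum_distrib_right by (rule sum.cong[OF refl], rule eq, simp)
    then show ?thesis by (simp only: euler_rec2 mult_minus_left)
  qed
  also have "\<dots> = of_int (- (\<Sum>i<Suc m. int (Suc m choose i) * 2 ^ (Suc m - i) * ee i))"
    by (simp add: ee)
  finally show ?thesis by (simp only: of_int_eq_iff)
qed

definition aa :: "nat \<Rightarrow> nat \<Rightarrow> int" where "aa p n = (\<Sum>x<p. (-1) ^ x * int x ^ n)"

lemma aa_rec:
  assumes "odd p"
  shows "(\<Sum>i\<le>n. int (n choose i) * aa p i) + aa p n = 0 ^ n + int p ^ n"
proof -
  define b where "b x = (-1) ^ x * int x ^ n" for x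
  have "(\<Sum>i\<le>n. int (n choose i) * aa p i) = (\<Sum>x<p. (-1) ^ x * (int x + 1) ^ n)"
    unfolding aa_def sum_distrib_left binomial_ring
    by (subst sum.swap) (simp add: sum_distrib_left mult_ac)
  then have "(\<Sum>i\<le>n. int (n choose i) * aa p i) + aa p n =
      (\<Sum>x<p. (-1) ^ x * (int x + 1) ^ n + (-1) ^ x * int x ^ n)"
    unfolding aa_def by (simp add: sum.distrib)
  also have "\<dots> = (\<Sum>x<p. b x - b (Suc x))"
    unfolding b_def by (intro sum.cong) (auto simp: algebra_simps)
  also have "\<dots> = b 0 - b p" using sum_lessThan_telescope'[of b p] by simp
  also have "\<dots> = 0 ^ n + int p ^ n" using assms by (simp add: b_def)
  finally show ?thesis .
qed

lemma aa_0: "odd p \<Longrightarrow> aa p 0 = 1"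
  using aa_rec[of p 0] by simp

lemma aa_rec2:
  assumes "odd p"
  shows "2 * aa p (Suc m) = int p ^ Suc m - (\<Sum>i<Suc m. int (Suc m choose i) * aa p i)"
proof -
  have "(\<Sum>i\<le>Suc m. int (Suc m choose i) * aa p i) =
     (\<Sum>i<Suc m. int (Suc m choose i) * aa p i) + aa p (Suc m)"
    by (simp add: lessThan_Suc_atMost[symmetric])
  with aa_rec[OF assms, of "Suc m"] show ?thesis by simp
qed

lemma ee_cong:
  assumes p: "prime p" "odd p"
  shows "[ee n = 2 ^ n * aa p n] (mod int p)"
proof (induction n rule: less_induct)
  case (less n)
  show ?case
  proof (cases n)
    case 0 then show ?thesis using p by (simp add: ee_0 aa_0)
  next
    case (Suc m)
    have "[2 * ee (Suc m) = - (\<Sum>i<Suc m. int (Suc m choose i) * 2 ^ (Suc m - i) * (2 ^ i * aa p i))] (mod int p)"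
      unfolding ee_rec
      by (intro cong_uminus cong_sum cong_mult cong_refl) (use less Suc in auto)
    also have "- (\<Sum>i<Suc m. int (Suc m choose i) * 2 ^ (Suc m - i) * (2 ^ i * aa p i)) =
        2 ^ Suc m * (- (\<Sum>i<Suc m. int (Suc m choose i) * aa p i))"
    proof -
      have "int (Suc m choose i) * 2 ^ (Suc m - i) * (2 ^ i * aa p i) =
            2 ^ Suc m * (int (Suc m choose i) * aa p i)" if "i < Suc m" for i
      proof -
        have "(2::int) ^ Suc m = 2 ^ (Suc m - i) * 2 ^ i" using that
          by (simp add: power_add[symmetric] del: power_Suc)
        then show ?thesis by simp
      qed
      then have "(\<Sum>i<Suc m. int (Suc m choose i) * 2 ^ (Suc m - i) * (2 ^ i * aa p i)) =
          2 ^ Suc m * (\<Sum>i<Suc m. int (Suc m choose i) * aa p i)"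
        unfolding sum_distrib_left by (rule sum.cong[OF refl], simp)
      then show ?thesis by (simp only: mult_minus_right)
    qed
    also have "\<dots> = 2 ^ Suc m * (2 * aa p (Suc m)) - 2 ^ Suc m * int p ^ Suc m"
    proof -
      have h: "- (\<Sum>i<Suc m. int (Suc m choose i) * aa p i) = 2 * aa p (Suc m) - int p ^ Suc m"
        using aa_rec2[OF p(2), of m] by linarith
      show ?thesis unfolding h by (rule right_diff_distrib)
    qed
    also have "[\<dots> = 2 ^ Suc m * (2 * aa p (Suc m)) - 0] (mod int p)"
      by (intro cong_diff cong_refl) (simp add: cong_0_iff)
    finally have "[2 * ee (Suc m) = 2 * (2 ^ Suc m * aa p (Suc m))] (mod int p)"
      by (simp add: mult_ac)
    then have "[ee (Suc m) = 2 ^ Suc m * aa p (Suc m)] (mod int p)"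
      using p by (subst (asm) cong_mult_lcancel) auto
    then show ?thesis using Suc by simp
  qed
qed

lemma geo_cong:
  assumes p: "prime p" and x: "x < p"
  shows "[(\<Sum>j\<le>p. int x ^ j) = int x + 1 - (if x = 1 then 1 else 0)] (mod int p)"
proof -
  consider "x = 0" | "x = 1" | "2 \<le> x" by linarith
  then show ?thesis
  proof cases
    case 1
    have "(\<Sum>j\<le>n. (0::int) ^ j) = 1" for n by (induction n) auto
    then show ?thesis using 1 by simp
  next
    case 2
    have c: "[int p + 1 = 0 + 1] (mod int p)" by (intro cong_add cong_refl) (simp add: cong_0_iff)
    have e1: "(\<Sum>j\<le>p. int x ^ j) = int p + 1" using 2 by simp
    have e2: "int x + 1 - (if x = 1 then 1 else 0) = 0 + 1" using 2 by simp
    show ?thesis unfolding e1 e2 by (rule c)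
  next
    case 3
    have np: "\<not> p dvd x" using 3 x by (simp add: nat_dvd_not_less)
    have "[x ^ (p - 1) = 1] (mod p)" by (rule fermat_theorem[OF p np])
    then have f: "[int x ^ (p - 1) = 1] (mod int p)"
      by (metis cong_int_iff of_nat_1 of_nat_power)
    have p2: "p \<ge> 2" using prime_ge_2_nat[OF p] .
    have "(int x - 1) * (\<Sum>j\<le>p. int x ^ j) = int x ^ Suc p - 1"
      using power_diff_1_eq[of "int x" "Suc p"] by (simp add: lessThan_Suc_atMost)
    also have "int x ^ Suc p = int x ^ (p - 1) * int x ^ 2"
      using p2 by (simp add: power_add[symmetric] del: power_Suc)
    also have "[int x ^ (p - 1) * int x ^ 2 - 1 = 1 * int x ^ 2 - 1] (mod int p)"
      by (intro cong_diff cong_mult f cong_refl)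
    also have "1 * int x ^ 2 - 1 = (int x - 1) * (int x + 1)" by (simp add: algebra_simps power2_eq_square)
    finally have c: "[(int x - 1) * (\<Sum>j\<le>p. int x ^ j) = (int x - 1) * (int x + 1)] (mod int p)" .
    have "coprime (int (x - 1)) (int p)"
    proof -
      have "\<not> p dvd (x - 1)" using 3 x by (intro nat_dvd_not_less) auto
      then have "coprime p (x - 1)" by (rule prime_imp_coprime[OF p])
      then show ?thesis by (simp add: coprime_commute)
    qed
    then have "coprime (int x - 1) (int p)" using 3 by (simp add: of_nat_diff)
    then have "[(\<Sum>j\<le>p. int x ^ j) = int x + 1] (mod int p)"
      using c by (simp add: cong_mult_lcancel)
    then show ?thesis using 3 by simp
  qed
qed

lemma alt_sum: "(\<Sum>x<Suc (2 * q). (-1) ^ x * (int x + 1)) = int q + 1"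
  by (induction q) (auto simp: algebra_simps)

lemma sum_aa_cong:
  assumes p: "prime p" "odd p"
  shows "[2 * (\<Sum>j\<le>p. aa p j) = 3] (mod int p)"
proof -
  obtain q where q: "p = Suc (2 * q)" using p(2) oddE by (metis Suc_eq_plus1)
  have "(\<Sum>j\<le>p. aa p j) = (\<Sum>x<p. (-1) ^ x * (\<Sum>j\<le>p. int x ^ j))"
    unfolding aa_def sum_distrib_left by (rule sum.swap)
  also have "[\<dots> = (\<Sum>x<p. (-1) ^ x * (int x + 1 - (if x = 1 then 1 else 0)))] (mod int p)"
    by (intro cong_sum cong_mult cong_refl geo_cong[OF p(1)]) simp
  also have "(\<Sum>x<p. (-1) ^ x * (int x + 1 - (if x = 1 then 1 else 0))) =
      (\<Sum>x<p. (-1) ^ x * (int x + 1)) - (\<Sum>x<p. (-1) ^ x * (if x = 1 then 1 else 0))"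
    by (simp only: sum_subtractf[symmetric] right_diff_distrib)
  also have "(\<Sum>x<p. (-1) ^ x * (if x = 1 then 1 else 0)) = (\<Sum>x<p. (if x = 1 then -1 else 0::int))"
    by (rule sum.cong) auto
  also have "\<dots> = -1" using prime_ge_2_nat[OF p(1)] by simp
  also have "(\<Sum>x<p. (-1) ^ x * (int x + 1)) = int q + 1" unfolding q by (rule alt_sum)
  also have "int q + 1 - - 1 = int q + 2" by simp
  finally have "[2 * (\<Sum>j\<le>p. aa p j) = 2 * (int q + 2)] (mod int p)" by (rule cong_scalar_left)
  also have "2 * (int q + 2) = int p + 3" using q by simp
  also have "[int p + 3 = 0 + 3] (mod int p)" by (intro cong_add cong_refl) (simp add: cong_0_iff)
  finally show ?thesis by simp
qed

lemma denom_coprime: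
  fixes p :: nat
  assumes p: "prime p" "odd p"
  shows "coprime (snd (quotient_of (of_int M / 2 ^ k :: rat))) (int p)"
proof -
  obtain a b where ab: "quotient_of (of_int M / 2 ^ k :: rat) = (a, b)" by (cases "quotient_of (of_int M / 2 ^ k :: rat)")
  have b0: "b > 0" using quotient_of_denom_pos[OF ab] .
  have cab: "coprime a b" using quotient_of_coprime[OF ab] .
  have "(of_int M / 2 ^ k :: rat) = of_int a / of_int b" using quotient_of_div[OF ab] .
  then have "of_int M * of_int b = (of_int a * 2 ^ k :: rat)" using b0
    by (simp add: field_simps)
  then have "M * b = a * 2 ^ k" by (metis of_int_eq_iff of_int_mult of_int_power of_int_numeral)
  then have "b dvd a * 2 ^ k" by (metis dvd_triv_right)
  then have bd: "b dvd 2 ^ k" using cab by (simp add: coprime_dvd_mult_right_iff coprime_commute)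
  have "\<not> int p dvd b"
  proof
    assume "int p dvd b"
    then have "int p dvd 2 ^ k" using bd by (rule dvd_trans)
    moreover have "prime (int p)" using p by simp
    ultimately have "int p dvd 2" using prime_dvd_power by blast
    then have "p dvd 2" by (metis int_dvd_int_iff of_nat_numeral)
    then have "p \<le> 2" by (simp add: dvd_imp_le)
    then show False using p prime_ge_2_nat[OF p(1)] by (metis le_antisym even_numeral)
  qed
  then have "coprime (int p) b" using p by (intro prime_imp_coprime) auto
  then show ?thesis using ab by (simp add: coprime_commute)
qed

theorem corollary4:
  fixes p :: nat
  assumes "prime p" and "odd p"
  shows "rat_cong_mod (\<Sum>j=0..p. euler_number j) (3/2) (int p)"
proof -
  have p1: "p \<ge> 1" using prime_ge_2_nat[OF assms(1)] by simp
  define N where "N = (\<Sum>j\<le>p. ee j * 2 ^ (p - j))"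
  have sumE: "(\<Sum>j=0..p. euler_number j) = of_int N / 2 ^ p"
  proof -
    have "euler_number j = of_int (ee j * 2 ^ (p - j)) / 2 ^ p" if "j \<le> p" for j
    proof -
      have "(2::rat) ^ p = 2 ^ (p - j) * 2 ^ j" using that by (simp add: power_add[symmetric])
      then show ?thesis by (simp add: ee)
    qed
    then have "(\<Sum>j=0..p. euler_number j) = (\<Sum>j\<le>p. of_int (ee j * 2 ^ (p - j)) / 2 ^ p)"
      by (auto simp: atLeast0AtMost intro: sum.cong)
    also have "\<dots> = of_int N / 2 ^ p" by (simp add: N_def sum_divide_distrib)
    finally show ?thesis .
  qed
  have "[N = (\<Sum>j\<le>p. 2 ^ j * aa p j * 2 ^ (p - j))] (mod int p)"
    unfolding N_def by (intro cong_sum cong_mult cong_refl ee_cong assms)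
  also have "(\<Sum>j\<le>p. 2 ^ j * aa p j * 2 ^ (p - j)) = 2 ^ (p - 1) * (2 * (\<Sum>j\<le>p. aa p j))"
  proof -
    have eq: "2 ^ j * aa p j * 2 ^ (p - j) = 2 ^ (p - 1) * (2 * aa p j)" if "j \<le> p" for j
    proof -
      have "(2::int) ^ j * 2 ^ (p - j) = 2 ^ p" using that by (simp add: power_add[symmetric])
      also have "(2::int) ^ p = 2 ^ (p - 1) * 2" using p1 by (simp add: power_Suc2[symmetric])
      finally show ?thesis by (simp add: mult_ac)
    qed
    show ?thesis unfolding sum_distrib_left by (rule sum.cong[OF refl], rule eq, simp)
  qed
  also have "[2 ^ (p - 1) * (2 * (\<Sum>j\<le>p. aa p j)) = 2 ^ (p - 1) * 3] (mod int p)"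
    by (intro cong_scalar_left sum_aa_cong assms)
  finally have "int p dvd N - 2 ^ (p - 1) * 3" by (simp add: cong_iff_dvd_diff)
  then obtain M where M: "N - 2 ^ (p - 1) * 3 = int p * M" by blast
  have "(\<Sum>j=0..p. euler_number j) - 3 / 2 = of_int p * (of_int M / 2 ^ p)"
  proof -
    have "(2::rat) ^ p = 2 ^ (p - 1) * 2" using p1 by (simp add: power_Suc2[symmetric])
    then have "(3 / 2 :: rat) = of_int (2 ^ (p - 1) * 3) / 2 ^ p" by simp
    then have "(\<Sum>j=0..p. euler_number j) - 3 / 2 = of_int (N - 2 ^ (p - 1) * 3) / 2 ^ p"
      unfolding sumE by (simp add: diff_divide_distrib)
    also have "\<dots> = of_int p * (of_int M / 2 ^ p)" unfolding M by simp
    finally show ?thesis .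
  qed
  then show ?thesis unfolding rat_cong_mod_def using denom_coprime[OF assms, of M p] by blast
qed
end
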